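(* Let $X$ be as in the context and assume $X$ is recurrent. Suppose there exist non-negative functions $f_1,f_2$ on $\mathbb S$ such that (i) $\lim_{x\to\infty}f_1(x)=\infty$ and $\lim_{x\to\infty}f_2(x)/f_1(x)=\infty$; (ii) $\mathcal A f_1(x)\ge0$ for all sufficiently large $x\in\mathbb S$; (iii) $\mathcal A f_2(x)\lesssim 1$. Then $X$ is null recurrent.
   Context: Let $\mathbb S\subseteq\mathbb Z_{\ge0}$ be an infinite set and let $X$ be an irreducible continuous-time Markov chain on $\mathbb S$ whose generator acts on functions $f:\mathbb S\to\mathbb R$ by $\mathcal A f(x)=\sum_{\eta\in\mathbb Z}\lambda_\eta(x)\big(f(x+\eta)-f(x)\big)$, where $\lambda_\eta(x)$ is the rate of the jump $x\to x+\eta$ (and $\lambda_\eta(x)=0$ whenever $x+\eta\notin\mathbb S$). Standing assumption: (a) there is a finite set $\Gamma\subset\mathbb Z$ such that $\lambda_\eta\equiv0$ for $\eta\notin\Gamma$; (b) $0\le\lambda_\eta(x)<\infty$ for all $x,\eta$. Notation: $f\lesssim g$ means there is $C>0$ with $f(x)\le Cg(x)$ for all sufficiently large $x\in\mathbb S$. $X$ is null recurrent if it is recurrent but $\mathbb E_x[\tau_x]=\infty$ ($\tau_x$ the first return time to $x$ after the first jump). *)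

theory Defs
  imports "HOL-Probability.Probability"
begin

text \<open>A continuous-time Markov chain on a state space S (a subset of the naturals) with
  jump rates lam eta x (rate of the jump x to x + eta), eta an integer.\<close>

definition jumps :: "(int \<Rightarrow> nat \<Rightarrow> real) \<Rightarrow> int set" where
  "jumps lam = {\<eta>. \<eta> \<noteq> 0 \<and> (\<exists>x. lam \<eta> x \<noteq> 0)}"

definition shift :: "nat \<Rightarrow> int \<Rightarrow> nat" where
  "shift x \<eta> = nat (int x + \<eta>)"

definition gen :: "(int \<Rightarrow> nat \<Rightarrow> real) \<Rightarrow> (nat \<Rightarrow> real) \<Rightarrow> nat \<Rightarrow> real" where
  "gen lam f x = (\<Sum>\<eta>\<in>jumps lam. lam \<eta> x * (f (shift x \<eta>) - f x))"

definition qrate :: "(int \<Rightarrow> nat \<Rightarrow> real) \<Rightarrow> nat \<Rightarrow> real" where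
  "qrate lam y = (\<Sum>\<eta>\<in>jumps lam. lam \<eta> y)"

definition irreducible_chain :: "nat set \<Rightarrow> (int \<Rightarrow> nat \<Rightarrow> real) \<Rightarrow> bool" where
  "irreducible_chain S lam \<longleftrightarrow>
     (\<forall>x\<in>S. \<forall>y\<in>S. (x, y) \<in> {(a, shift a \<eta>) | a \<eta>. a \<in> S \<and> \<eta> \<noteq> 0 \<and> lam \<eta> a > 0}\<^sup>*)"

text \<open>The randomness is an i.i.d. sequence of pairs (u_n, e_n),
  u_n uniform on [0,1), e_n standard exponential. At step n, in state y, the chain waits
  e_n / q(y) and then jumps to y + eta, where eta is chosen from the (sorted) finite jump set with
  probability lam eta y / q(y) by inverting the cumulative distribution at u_n.\<close>

definition base_measure :: "(real \<times> real) measure" where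
  "base_measure = uniform_measure lborel {0..<1} \<Otimes>\<^sub>M density lborel (\<lambda>t. ennreal (exponential_density 1 t))"

definition Omega :: "(nat \<Rightarrow> real \<times> real) measure" where
  "Omega = PiM UNIV (\<lambda>_. base_measure)"

definition next_state :: "(int \<Rightarrow> nat \<Rightarrow> real) \<Rightarrow> nat \<Rightarrow> real \<Rightarrow> nat" where
  "next_state lam y u =
     (let js = sorted_list_of_set (jumps lam);
          cum = (\<lambda>k. \<Sum>i<k. lam (js ! i) y)
      in case find (\<lambda>k. u * qrate lam y < cum (Suc k)) [0..<length js] of
           None \<Rightarrow> y
         | Some k \<Rightarrow> shift y (js ! k))"

primrec jchain :: "(int \<Rightarrow> nat \<Rightarrow> real) \<Rightarrow> nat \<Rightarrow> (nat \<Rightarrow> real \<times> real) \<Rightarrow> nat \<Rightarrow> nat" where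
  "jchain lam x \<omega> 0 = x"
| "jchain lam x \<omega> (Suc n) = next_state lam (jchain lam x \<omega> n) (fst (\<omega> n))"

definition hold :: "(int \<Rightarrow> nat \<Rightarrow> real) \<Rightarrow> nat \<Rightarrow> (nat \<Rightarrow> real \<times> real) \<Rightarrow> nat \<Rightarrow> real" where
  "hold lam x \<omega> n = snd (\<omega> n) / qrate lam (jchain lam x \<omega> n)"

definition return_time :: "(int \<Rightarrow> nat \<Rightarrow> real) \<Rightarrow> nat \<Rightarrow> (nat \<Rightarrow> real \<times> real) \<Rightarrow> ennreal" where
  "return_time lam x \<omega> =
     (if \<exists>n\<ge>1. jchain lam x \<omega> n = x
      then ennreal (\<Sum>k < (LEAST n. n \<ge> 1 \<and> jchain lam x \<omega> n = x). hold lam x \<omega> k)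
      else \<infinity>)"

definition recurrent_chain :: "nat set \<Rightarrow> (int \<Rightarrow> nat \<Rightarrow> real) \<Rightarrow> bool" where
  "recurrent_chain S lam \<longleftrightarrow>
     (\<forall>x\<in>S. emeasure Omega {\<omega> \<in> space Omega. \<exists>n\<ge>1. jchain lam x \<omega> n = x} = 1)"

definition null_recurrent_chain :: "nat set \<Rightarrow> (int \<Rightarrow> nat \<Rightarrow> real) \<Rightarrow> bool" where
  "null_recurrent_chain S lam \<longleftrightarrow>
     recurrent_chain S lam \<and> (\<forall>x\<in>S. (\<integral>\<^sup>+ \<omega>. return_time lam x \<omega> \<partial>Omega) = \<infinity>)"

abbreviation at_top_in :: "nat set \<Rightarrow> nat filter" where
  "at_top_in S \<equiv> inf at_top (principal S)"

end

theory Submission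
  imports Defs
begin


locale chain =
  fixes S :: "nat set" and lam :: "int \<Rightarrow> nat \<Rightarrow> real"
  assumes S_inf: "infinite S"
    and Gamma: "\<exists>\<Gamma>. finite \<Gamma> \<and> (\<forall>\<eta>. \<eta> \<notin> \<Gamma> \<longrightarrow> (\<forall>x. lam \<eta> x = 0))"
    and nonneg: "\<And>\<eta> x. lam \<eta> x \<ge> 0"
    and stay: "\<And>\<eta> x. x \<in> S \<Longrightarrow> int x + \<eta> \<notin> int ` S \<Longrightarrow> lam \<eta> x = 0"
    and irred: "irreducible_chain S lam"
begin

abbreviation "J \<equiv> jumps lam"
abbreviation "q \<equiv> qrate lam"
definition "p x \<eta> = lam \<eta> x / q x"

lemma finJ: "finite J"
proof -
  obtain G where "finite G" "\<forall>\<eta>. \<eta> \<notin> G \<longrightarrow> (\<forall>x. lam \<eta> x = 0)" using Gamma by blast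
  then have "J \<subseteq> G" unfolding jumps_def by auto
  with \<open>finite G\<close> show ?thesis by (metis finite_subset)
qed

lemma shift_in: "x \<in> S \<Longrightarrow> lam \<eta> x \<noteq> 0 \<Longrightarrow> shift x \<eta> \<in> S"
proof -
  assume a: "x \<in> S" "lam \<eta> x \<noteq> 0"
  then have "int x + \<eta> \<in> int ` S" using stay by blast
  then obtain s where "s \<in> S" "int x + \<eta> = int s" by blast
  then show ?thesis unfolding shift_def by simp
qed

lemma shift_in': "x \<in> S \<Longrightarrow> lam \<eta> x > 0 \<Longrightarrow> shift x \<eta> \<in> S"
  using shift_in by force

definition "R = {(a, shift a \<eta>) | a \<eta>. a \<in> S \<and> \<eta> \<noteq> 0 \<and> lam \<eta> a > 0}"

lemma R_path: "x \<in> S \<Longrightarrow> y \<in> S \<Longrightarrow> (x, y) \<in> R\<^sup>*"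
  using irred unfolding irreducible_chain_def R_def by blast

lemma q_pos: assumes "x \<in> S" shows "q x > 0"
proof -
  obtain y where y: "y \<in> S" "y \<noteq> x" using S_inf assms
    by (metis finite_insert finite_subset insertI1 subsetI insert_iff infinite_imp_nonempty)
  have "(x, y) \<in> R\<^sup>*" using R_path assms y by blast
  then obtain z where "(x, z) \<in> R" using y(2)
    by (metis converse_rtranclE)
  then obtain \<eta> where e: "\<eta> \<noteq> 0" "lam \<eta> x > 0" unfolding R_def by blast
  then have "\<eta> \<in> J" unfolding jumps_def using e by (auto intro!: exI[of _ x])
  have "lam \<eta> x \<le> q x" unfolding qrate_def
    by (rule member_le_sum[OF \<open>\<eta> \<in> J\<close>]) (auto simp: nonneg finJ)
  with e show ?thesis by linarith
qed

lemma p_nonneg: "p x \<eta> \<ge> 0"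
  unfolding p_def using nonneg[of \<eta> x] by (simp add: qrate_def sum_nonneg nonneg)

lemma sum_p: "x \<in> S \<Longrightarrow> (\<Sum>\<eta>\<in>J. p x \<eta>) = 1"
  using q_pos[of x] unfolding p_def by (simp add: sum_divide_distrib[symmetric] qrate_def)

lemma p_le1: "x \<in> S \<Longrightarrow> \<eta> \<in> J \<Longrightarrow> p x \<eta> \<le> 1"
  using sum_p[of x] member_le_sum[of \<eta> J "p x"] p_nonneg finJ by force

lemma gen_eq: "x \<in> S \<Longrightarrow> (\<Sum>\<eta>\<in>J. p x \<eta> * f (shift x \<eta>)) = f x + gen lam f x / q x"
proof -
  assume x: "x \<in> S"
  have "gen lam f x = (\<Sum>\<eta>\<in>J. lam \<eta> x * f (shift x \<eta>)) - q x * f x"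
    unfolding gen_def qrate_def by (simp add: algebra_simps sum_subtractf sum_distrib_right sum_distrib_left)
  then show ?thesis using q_pos[OF x]
    by (simp add: p_def field_simps sum_divide_distrib[symmetric])
qed

lemma sum_mono_S:
  assumes "x \<in> S" "\<And>y. y \<in> S \<Longrightarrow> F y \<le> G y"
  shows "(\<Sum>\<eta>\<in>J. p x \<eta> * F (shift x \<eta>)) \<le> (\<Sum>\<eta>\<in>J. p x \<eta> * G (shift x \<eta>))"
proof (rule sum_mono)
  fix \<eta> assume "\<eta> \<in> J"
  show "p x \<eta> * F (shift x \<eta>) \<le> p x \<eta> * G (shift x \<eta>)"
  proof (cases "lam \<eta> x = 0")
    case True then show ?thesis by (simp add: p_def)
  next
    case False then show ?thesis using shift_in[OF assms(1) False] assms(2) p_nonneg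
      by (simp add: mult_left_mono)
  qed
qed

primrec Vr :: "nat set \<Rightarrow> (nat \<Rightarrow> real) \<Rightarrow> (nat \<Rightarrow> real) \<Rightarrow> nat \<Rightarrow> nat \<Rightarrow> real" where
  "Vr B hi ho 0 x = (if x \<in> B then hi x else ho x)"
| "Vr B hi ho (Suc n) x = (if x \<in> B then hi x else (\<Sum>\<eta>\<in>J. p x \<eta> * Vr B hi ho n (shift x \<eta>)))"

primrec Gr :: "nat set \<Rightarrow> nat \<Rightarrow> nat \<Rightarrow> real" where
  "Gr B 0 x = 0"
| "Gr B (Suc n) x = (if x \<in> B then 0 else 1 / q x + (\<Sum>\<eta>\<in>J. p x \<eta> * Gr B n (shift x \<eta>)))"

lemma Gr_nonneg: "x \<in> S \<Longrightarrow> Gr B n x \<ge> 0"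
proof (induction n arbitrary: x)
  case 0 then show ?case by simp
next
  case (Suc n)
  have "(\<Sum>\<eta>\<in>J. p x \<eta> * (\<lambda>_. 0) (shift x \<eta>)) \<le> (\<Sum>\<eta>\<in>J. p x \<eta> * Gr B n (shift x \<eta>))"
    by (rule sum_mono_S[OF Suc.prems]) (use Suc.IH in auto)
  then show ?case using q_pos[OF Suc.prems] by simp
qed

lemma Vs_bounds: "x \<in> S \<Longrightarrow> 0 \<le> Vr B (\<lambda>_. 0) (\<lambda>_. 1) n x \<and> Vr B (\<lambda>_. 0) (\<lambda>_. 1) n x \<le> 1"
proof (induction n arbitrary: x)
  case 0 then show ?case by simp
next
  case (Suc n)
  let ?V = "Vr B (\<lambda>_. 0) (\<lambda>_. 1) n"
  have a: "(\<Sum>\<eta>\<in>J. p x \<eta> * (\<lambda>_. 0) (shift x \<eta>)) \<le> (\<Sum>\<eta>\<in>J. p x \<eta> * ?V (shift x \<eta>))"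
    by (rule sum_mono_S[OF Suc.prems]) (use Suc.IH in auto)
  have b: "(\<Sum>\<eta>\<in>J. p x \<eta> * ?V (shift x \<eta>)) \<le> (\<Sum>\<eta>\<in>J. p x \<eta> * (\<lambda>_. 1) (shift x \<eta>))"
    by (rule sum_mono_S[OF Suc.prems]) (use Suc.IH in auto)
  show ?case using a b sum_p[OF Suc.prems] by simp
qed

lemma Vs_mono: "x \<in> S \<Longrightarrow> Vr B (\<lambda>_. 0) (\<lambda>_. 1) (Suc n) x \<le> Vr B (\<lambda>_. 0) (\<lambda>_. 1) n x"
proof (induction n arbitrary: x)
  case 0
  have b: "(\<Sum>\<eta>\<in>J. p x \<eta> * Vr B (\<lambda>_. 0) (\<lambda>_. 1) 0 (shift x \<eta>)) \<le> (\<Sum>\<eta>\<in>J. p x \<eta> * (\<lambda>_. 1) (shift x \<eta>))"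
    by (rule sum_mono_S[OF 0]) auto
  then show ?case using sum_p[OF 0] by simp
next
  case (Suc n)
  have b: "(\<Sum>\<eta>\<in>J. p x \<eta> * Vr B (\<lambda>_. 0) (\<lambda>_. 1) (Suc n) (shift x \<eta>)) \<le> (\<Sum>\<eta>\<in>J. p x \<eta> * Vr B (\<lambda>_. 0) (\<lambda>_. 1) n (shift x \<eta>))"
    by (rule sum_mono_S[OF Suc.prems]) (use Suc.IH in auto)
  then show ?case by (simp del: Vr.simps(2) add: Vr.simps(2)[of B _ _ "Suc n"] Vr.simps(2)[of B _ _ n])
qed

lemma Vs_mono': "x \<in> S \<Longrightarrow> m \<le> n \<Longrightarrow> Vr B (\<lambda>_. 0) (\<lambda>_. 1) n x \<le> Vr B (\<lambda>_. 0) (\<lambda>_. 1) m x"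
proof (induction n)
  case 0 then show ?case by simp
next
  case (Suc n) then show ?case using Vs_mono[where x=x and n=n and B=B] by (cases "m = Suc n") auto
qed

lemma Gr_comp: "x \<in> S \<Longrightarrow> B \<subseteq> B' \<Longrightarrow> Gr B' n x \<le> Gr B n x"
proof (induction n arbitrary: x)
  case 0 then show ?case by simp
next
  case (Suc n)
  have b: "(\<Sum>\<eta>\<in>J. p x \<eta> * Gr B' n (shift x \<eta>)) \<le> (\<Sum>\<eta>\<in>J. p x \<eta> * Gr B n (shift x \<eta>))"
    by (rule sum_mono_S[OF Suc.prems(1)]) (use Suc in auto)
  then show ?case using Suc.prems Gr_nonneg[of x B "Suc n"] by (cases "x \<in> B'") auto
qed

lemma Vs_comp: "x \<in> S \<Longrightarrow> B \<subseteq> B' \<Longrightarrow> Vr B' (\<lambda>_. 0) (\<lambda>_. 1) n x \<le> Vr B (\<lambda>_. 0) (\<lambda>_. 1) n x"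
proof (induction n arbitrary: x)
  case 0 then show ?case by auto
next
  case (Suc n)
  have b: "(\<Sum>\<eta>\<in>J. p x \<eta> * Vr B' (\<lambda>_. 0) (\<lambda>_. 1) n (shift x \<eta>)) \<le> (\<Sum>\<eta>\<in>J. p x \<eta> * Vr B (\<lambda>_. 0) (\<lambda>_. 1) n (shift x \<eta>))"
    by (rule sum_mono_S[OF Suc.prems(1)]) (use Suc in auto)
  then show ?case using Suc.prems Vs_bounds[of x B "Suc n"] by (cases "x \<in> B'") auto
qed

lemma single_term:
  assumes "x \<in> S" "\<eta> \<in> J" "\<And>y. y \<in> S \<Longrightarrow> F y \<ge> 0"
  shows "p x \<eta> * F (shift x \<eta>) \<le> (\<Sum>\<eta>\<in>J. p x \<eta> * F (shift x \<eta>))"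
proof (rule member_le_sum[OF assms(2) _ finJ])
  fix e assume "e \<in> J - {\<eta>}"
  show "0 \<le> p x e * F (shift x e)"
  proof (cases "lam e x = 0")
    case True then show ?thesis by (simp add: p_def)
  next
    case False then show ?thesis using shift_in[OF assms(1) False] assms(3) p_nonneg by simp
  qed
qed

lemma f1_lower:
  assumes "\<And>x. x \<in> S \<Longrightarrow> x \<notin> B \<Longrightarrow> gen lam f x \<ge> 0"
  shows "x \<in> S \<Longrightarrow> Vr B f f n x \<ge> f x"
proof (induction n arbitrary: x)
  case 0 then show ?case by simp
next
  case (Suc n)
  show ?case
  proof (cases "x \<in> B")
    case False
    have b: "(\<Sum>\<eta>\<in>J. p x \<eta> * f (shift x \<eta>)) \<le> (\<Sum>\<eta>\<in>J. p x \<eta> * Vr B f f n (shift x \<eta>))"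
      by (rule sum_mono_S[OF Suc.prems(1)]) (use Suc in auto)
    moreover have "f x \<le> (\<Sum>\<eta>\<in>J. p x \<eta> * f (shift x \<eta>))"
      using gen_eq[OF Suc.prems, of f] assms[OF Suc.prems False] q_pos[OF Suc.prems] by simp
    ultimately show ?thesis using False by simp
  qed simp
qed

lemma f2_upper:
  assumes "\<And>x. x \<in> S \<Longrightarrow> x \<notin> B \<Longrightarrow> gen lam f x \<le> C" "C \<ge> 0"
  shows "x \<in> S \<Longrightarrow> Vr B f f n x \<le> f x + C * Gr B n x"
proof (induction n arbitrary: x)
  case 0 then show ?case by simp
next
  case (Suc n)
  show ?case
  proof (cases "x \<in> B")
    case False
    have b: "(\<Sum>\<eta>\<in>J. p x \<eta> * Vr B f f n (shift x \<eta>)) \<le> (\<Sum>\<eta>\<in>J. p x \<eta> * (\<lambda>y. f y + C * Gr B n y) (shift x \<eta>))"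
      by (rule sum_mono_S[OF Suc.prems(1)]) (use Suc in auto)
    also have "\<dots> = (\<Sum>\<eta>\<in>J. p x \<eta> * f (shift x \<eta>)) + C * (\<Sum>\<eta>\<in>J. p x \<eta> * Gr B n (shift x \<eta>))"
      by (simp add: algebra_simps sum.distrib sum_distrib_left)
    also have "\<dots> \<le> f x + C / q x + C * (\<Sum>\<eta>\<in>J. p x \<eta> * Gr B n (shift x \<eta>))"
      using gen_eq[OF Suc.prems, of f] assms(1)[OF Suc.prems False] q_pos[OF Suc.prems]
      by (simp add: divide_right_mono)
    finally show ?thesis using False by (simp add: algebra_simps)
  qed simp
qed

lemma f1_upper:
  assumes "\<And>x. x \<in> S \<Longrightarrow> x \<in> B \<Longrightarrow> f x \<le> M" "M \<ge> 0" "e \<ge> 0"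
    "\<And>x. x \<in> S \<Longrightarrow> f x \<le> e * g x + K" "\<And>x. x \<in> S \<Longrightarrow> g x \<ge> 0" "K \<ge> 0"
  shows "x \<in> S \<Longrightarrow> Vr B f f n x \<le> M + e * Vr B g g n x + K * Vr B (\<lambda>_. 0) (\<lambda>_. 1) n x"
proof (induction n arbitrary: x)
  case 0
  have "0 \<le> e * g x" using assms(3) assms(5)[OF 0] by simp
  then show ?case using assms(1)[of x] assms(2,6) assms(4)[OF 0] 0 by auto
next
  case (Suc n)
  show ?case
  proof (cases "x \<in> B")
    case False
    have b: "(\<Sum>\<eta>\<in>J. p x \<eta> * Vr B f f n (shift x \<eta>)) \<le> (\<Sum>\<eta>\<in>J. p x \<eta> * (\<lambda>y. M + e * Vr B g g n y + K * Vr B (\<lambda>_. 0) (\<lambda>_. 1) n y) (shift x \<eta>))"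
      by (rule sum_mono_S[OF Suc.prems(1)]) (use Suc in auto)
    also have "\<dots> = M * (\<Sum>\<eta>\<in>J. p x \<eta>) + e * (\<Sum>\<eta>\<in>J. p x \<eta> * Vr B g g n (shift x \<eta>)) + K * (\<Sum>\<eta>\<in>J. p x \<eta> * Vr B (\<lambda>_. 0) (\<lambda>_. 1) n (shift x \<eta>))"
      by (simp add: algebra_simps sum.distrib sum_distrib_left)
    finally show ?thesis using False sum_p[OF Suc.prems] by simp
  next
    case True
    have "0 \<le> e * g x" using assms(3) assms(5)[OF Suc.prems] by simp
    then show ?thesis using True assms(1)[of x] assms(2) Suc.prems by auto
  qed
qed

lemma path_prop:
  assumes "(x0, y) \<in> R\<^sup>*" "\<Phi> y" "\<not> \<Phi> x0"
    "\<And>a \<eta>. a \<in> S \<Longrightarrow> \<eta> \<in> J \<Longrightarrow> lam \<eta> a > 0 \<Longrightarrow> a \<noteq> x0 \<Longrightarrow> \<Phi> (shift a \<eta>) \<Longrightarrow> \<Phi> a"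
  shows "\<exists>\<eta>. \<eta> \<in> J \<and> lam \<eta> x0 > 0 \<and> \<Phi> (shift x0 \<eta>)"
proof -
  let ?Psi = "\<exists>\<eta>. \<eta> \<in> J \<and> lam \<eta> x0 > 0 \<and> \<Phi> (shift x0 \<eta>)"
  have "\<Phi> z \<or> ?Psi" if "(z, y) \<in> R\<^sup>*" for z
    using that
  proof (induction rule: converse_rtrancl_induct)
    case base then show ?case using assms(2) by simp
  next
    case (step a b)
    from step.hyps(1) obtain \<eta> where e: "a \<in> S" "\<eta> \<noteq> 0" "lam \<eta> a > 0" "b = shift a \<eta>"
      unfolding R_def by blast
    then have J: "\<eta> \<in> J" unfolding jumps_def by (auto intro!: exI[of _ a])
    show ?case
    proof (cases ?Psi)
      case False
      then have "\<Phi> b" using step.IH by blast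
      show ?thesis
      proof (cases "a = x0")
        case True then show ?thesis using \<open>\<Phi> b\<close> e J by blast
      next
        case False then show ?thesis using assms(4)[OF e(1) J e(3) False] \<open>\<Phi> b\<close> e(4) by blast
      qed
    qed simp
  qed
  from this[OF assms(1)] assms(3) show ?thesis by blast
qed

lemma lam_pos_J: "\<eta> \<in> J \<Longrightarrow> lam \<eta> x > 0 \<Longrightarrow> x \<in> S \<Longrightarrow> p x \<eta> > 0"
  using q_pos[of x] by (simp add: p_def)

definition "PhiV x0 z \<longleftrightarrow> z \<in> S \<and> (\<exists>d>0. \<forall>n. Vr {x0} (\<lambda>_. 0) (\<lambda>_. 1) n z \<ge> d)"
definition "PhiG x0 z \<longleftrightarrow> z \<in> S \<and> (\<forall>K. \<exists>n. Gr {x0} n z > K)"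

lemma PhiV_step:
  assumes "a \<in> S" "\<eta> \<in> J" "lam \<eta> a > 0" "a \<noteq> x0" "PhiV x0 (shift a \<eta>)"
  shows "PhiV x0 a"
proof -
  let ?b = "shift a \<eta>"
  obtain d where d: "d > 0" "\<And>n. Vr {x0} (\<lambda>_. 0) (\<lambda>_. 1) n ?b \<ge> d" "?b \<in> S"
    using assms(5) unfolding PhiV_def by blast
  have pp: "p a \<eta> > 0" "p a \<eta> \<le> 1" using lam_pos_J assms p_le1 by auto
  have "Vr {x0} (\<lambda>_. 0) (\<lambda>_. 1) n a \<ge> p a \<eta> * d" for n
  proof (cases n)
    case 0
    have "d \<le> 1" using d(2)[of 0] Vs_bounds[OF d(3), of "{x0}" 0] by linarith
    then have "p a \<eta> * d \<le> 1" using pp d(1) by (simp add: mult_le_one)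
    then show ?thesis using 0 assms(4) by simp
  next
    case (Suc m)
    have "p a \<eta> * d \<le> p a \<eta> * Vr {x0} (\<lambda>_. 0) (\<lambda>_. 1) m ?b"
      using d(2)[of m] pp by (simp add: mult_left_mono)
    also have "\<dots> \<le> (\<Sum>\<eta>\<in>J. p a \<eta> * Vr {x0} (\<lambda>_. 0) (\<lambda>_. 1) m (shift a \<eta>))"
      by (rule single_term[OF assms(1,2)]) (use Vs_bounds in blast)
    finally show ?thesis using Suc assms(4) by simp
  qed
  then show ?thesis unfolding PhiV_def using assms(1) pp d(1) by (intro conjI exI[of _ "p a \<eta> * d"]) auto
qed

lemma PhiG_step:
  assumes "a \<in> S" "\<eta> \<in> J" "lam \<eta> a > 0" "a \<noteq> x0" "PhiG x0 (shift a \<eta>)"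
  shows "PhiG x0 a"
proof -
  let ?b = "shift a \<eta>"
  have pp: "p a \<eta> > 0" using lam_pos_J assms by auto
  have "\<exists>n. Gr {x0} n a > K" for K
  proof -
    obtain n where n: "Gr {x0} n ?b > K / p a \<eta>" using assms(5) unfolding PhiG_def by blast
    have "K < p a \<eta> * Gr {x0} n ?b" using n pp by (simp add: field_simps)
    also have "\<dots> \<le> (\<Sum>\<eta>\<in>J. p a \<eta> * Gr {x0} n (shift a \<eta>))"
      by (rule single_term[OF assms(1,2)]) (use Gr_nonneg in blast)
    also have "\<dots> \<le> Gr {x0} (Suc n) a" using assms(4) q_pos[OF assms(1)] by simp
    finally show ?thesis by blast
  qed
  then show ?thesis using assms(1) unfolding PhiG_def by blast
qed

lemma pure_main:
  fixes f1 f2 :: "nat \<Rightarrow> real" and N :: nat and C :: real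
  assumes x0: "x0 \<in> S" "x0 \<le> N"
    and g1: "\<And>x. x \<in> S \<Longrightarrow> x > N \<Longrightarrow> gen lam f1 x \<ge> 0"
    and g2: "\<And>x. x \<in> S \<Longrightarrow> x > N \<Longrightarrow> gen lam f2 x \<le> C" "C \<ge> 0"
    and f2nn: "\<And>x. x \<in> S \<Longrightarrow> f2 x \<ge> 0"
    and dom: "\<And>e. e > 0 \<Longrightarrow> \<exists>K\<ge>0. \<forall>x\<in>S. f1 x \<le> e * f2 x + K"
    and y: "y \<in> S" "f1 y > (\<Sum>x\<le>N. \<bar>f1 x\<bar>)"
  shows "\<exists>\<eta>. \<eta> \<in> J \<and> lam \<eta> x0 > 0 \<and> (PhiV x0 (shift x0 \<eta>) \<or> PhiG x0 (shift x0 \<eta>))"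
proof -
  define M where "M = (\<Sum>x\<le>N. \<bar>f1 x\<bar>)"
  define A where "A = {..N}"
  have sub: "{x0} \<subseteq> A" using x0 unfolding A_def by auto
  have M0: "M \<ge> 0" unfolding M_def by (simp add: sum_nonneg)
  have MA: "f1 x \<le> M" if "x \<in> A" for x
  proof -
    have "x \<in> {..N}" using that A_def by simp
    then have "\<bar>f1 x\<bar> \<le> M" unfolding M_def by (rule member_le_sum) auto
    then show ?thesis by simp
  qed
  have path: "(x0, y) \<in> R\<^sup>*" using R_path x0 y by blast
  show ?thesis
  proof (cases "\<exists>d>0. \<forall>n. Vr A (\<lambda>_. 0) (\<lambda>_. 1) n y \<ge> d")
    case True
    have "PhiV x0 y"
    proof -
      obtain d where d: "d > 0" "\<And>n. Vr A (\<lambda>_. 0) (\<lambda>_. 1) n y \<ge> d" using True by blast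
      have "Vr {x0} (\<lambda>_. 0) (\<lambda>_. 1) n y \<ge> d" for n using d(2)[of n] Vs_comp[OF y(1) sub, of n] by linarith
      then show ?thesis unfolding PhiV_def using y(1) d(1) by (intro conjI exI[of _ d]) auto
    qed
    moreover have "\<not> PhiV x0 x0"
    proof
      assume "PhiV x0 x0"
      then obtain d where "d > 0" "Vr {x0} (\<lambda>_. 0) (\<lambda>_. 1) 0 x0 \<ge> d" unfolding PhiV_def by blast
      then show False by simp
    qed
    ultimately have "\<exists>\<eta>. \<eta> \<in> J \<and> lam \<eta> x0 > 0 \<and> PhiV x0 (shift x0 \<eta>)"
      using path_prop[OF path, of "PhiV x0"] \<open>PhiV x0 y\<close> \<open>\<not> PhiV x0 x0\<close> PhiV_step[of _ _ x0] by blast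
    then show ?thesis by blast
  next
    case False
    then have small: "\<exists>n. Vr A (\<lambda>_. 0) (\<lambda>_. 1) n y < d" if "d > 0" for d
      using that by (auto simp: not_le)
    have "PhiG x0 y"
    proof (rule ccontr)
      assume "\<not> PhiG x0 y"
      then obtain K where K: "\<And>n. Gr {x0} n y \<le> K" unfolding PhiG_def using y by (auto simp: not_less)
      have GA: "Gr A n y \<le> K" for n using Gr_comp[OF y(1) sub, of n] K[of n] by linarith
      define L where "L = f2 y + C * K"
      have K0: "K \<ge> 0" using K[of 0] by simp
      have L0: "L \<ge> 0" unfolding L_def using f2nn[OF y(1)] K0 g2(2) by simp
      define gap where "gap = f1 y - M"
      have gap: "gap > 0" using y(2) unfolding gap_def M_def by simp
      define e where "e = gap / (2 * (L + 1))"
      have e0: "e > 0" unfolding e_def using gap L0 by simp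
      obtain Ke where Ke: "Ke \<ge> 0" "\<And>x. x \<in> S \<Longrightarrow> f1 x \<le> e * f2 x + Ke" using dom[OF e0] by blast
      obtain n where n: "Vr A (\<lambda>_. 0) (\<lambda>_. 1) n y < gap / (2 * (Ke + 1))"
        using small[of "gap / (2 * (Ke + 1))"] gap Ke(1) by auto
      have low: "f1 y \<le> Vr A f1 f1 n y"
        by (rule f1_lower[OF _ y(1)]) (use g1 A_def in auto)
      have up: "Vr A f1 f1 n y \<le> M + e * Vr A f2 f2 n y + Ke * Vr A (\<lambda>_. 0) (\<lambda>_. 1) n y"
        by (rule f1_upper[OF _ M0 _ Ke(2) f2nn Ke(1) y(1)]) (use MA e0 in auto)
      have up2: "Vr A f2 f2 n y \<le> f2 y + C * Gr A n y"
        by (rule f2_upper[OF _ g2(2) y(1)]) (use g2(1) A_def in auto)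
      have "C * Gr A n y \<le> C * K" using GA g2(2) by (simp add: mult_left_mono)
      then have "Vr A f2 f2 n y \<le> L" using up2 unfolding L_def by linarith
      then have t1: "e * Vr A f2 f2 n y \<le> e * L" using e0 by (simp add: mult_left_mono)
      have "e * L < gap / 2" unfolding e_def using gap L0 by (simp add: field_simps)
      moreover have "Ke * Vr A (\<lambda>_. 0) (\<lambda>_. 1) n y \<le> gap / 2"
      proof -
        have "Ke * Vr A (\<lambda>_. 0) (\<lambda>_. 1) n y \<le> Ke * (gap / (2 * (Ke + 1)))"
          using mult_left_mono[OF less_imp_le[OF n] Ke(1)] .
        also have "\<dots> \<le> gap / 2" using Ke(1) gap by (simp add: field_simps)
        finally show ?thesis .
      qed
      ultimately have "e * Vr A f2 f2 n y + Ke * Vr A (\<lambda>_. 0) (\<lambda>_. 1) n y < gap" using t1 by simp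
      then have "Vr A f1 f1 n y < M + gap" using up by simp
      then show False using low unfolding gap_def by simp
    qed
    moreover have "\<not> PhiG x0 x0"
    proof
      assume "PhiG x0 x0"
      then obtain n where "Gr {x0} n x0 > 0" unfolding PhiG_def by blast
      then show False by (cases n) auto
    qed
    ultimately have "\<exists>\<eta>. \<eta> \<in> J \<and> lam \<eta> x0 > 0 \<and> PhiG x0 (shift x0 \<eta>)"
      using path_prop[OF path, of "PhiG x0"] \<open>PhiG x0 y\<close> \<open>\<not> PhiG x0 x0\<close> PhiG_step[of _ _ x0] by blast
    then show ?thesis by blast
  qed
qed

end


lemma prob_U: "prob_space (uniform_measure lborel {0..<1::real})"
  by (rule prob_space_uniform_measure) auto

lemma prob_E: "prob_space (density lborel (\<lambda>t. ennreal (exponential_density 1 t)))"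
  using prob_space_exponential_density[of 1] by simp

lemma prob_base: "prob_space base_measure"
  unfolding base_measure_def
  by (rule prob_space_pair[OF prob_U prob_E])

lemma sets_base: "sets base_measure = sets (borel \<Otimes>\<^sub>M borel)"
  unfolding base_measure_def by (intro sets_pair_measure_cong) auto

interpretation base: prob_space base_measure by (rule prob_base)
interpretation SQ: sequence_space base_measure ..

lemma Omega_eq: "Omega = SQ.S" unfolding Omega_def ..

lemma prob_Omega: "prob_space Omega" unfolding Omega_eq by (rule SQ.prob_space_axioms)

lemma first_step:
  assumes [measurable]: "F \<in> borel_measurable Omega"
  shows "(\<integral>\<^sup>+\<omega>. F \<omega> \<partial>Omega) = (\<integral>\<^sup>+b. (\<integral>\<^sup>+\<omega>. F (case_nat b \<omega>) \<partial>Omega) \<partial>base_measure)"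
proof -
  interpret P: pair_sigma_finite base_measure SQ.S ..
  have Fm: "F \<in> borel_measurable SQ.S" using assms unfolding Omega_eq .
  have "(\<integral>\<^sup>+\<omega>. F \<omega> \<partial>SQ.S) = (\<integral>\<^sup>+X. F ((\<lambda>(s, \<omega>). case_nat s \<omega>) X) \<partial>(base_measure \<Otimes>\<^sub>M SQ.S))"
    by (subst SQ.PiM_iter[symmetric]) (simp add: nn_integral_distr Fm)
  also have "\<dots> = (\<integral>\<^sup>+x. \<integral>\<^sup>+X. F ((\<lambda>(s, \<omega>). case_nat s \<omega>) (x, X)) \<partial>SQ.S \<partial>base_measure)"
    by (subst SQ.nn_integral_fst) (use Fm in simp_all)
  finally show ?thesis unfolding Omega_eq by simp
qed

lemma find_meas:
  assumes "\<And>k. Measurable.pred M (P k)"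
  shows "(\<lambda>u. find (\<lambda>k. P k u) xs) \<in> measurable M (count_space UNIV)"
proof (induction xs)
  case Nil then show ?case by simp
next
  case (Cons a xs)
  have "(\<lambda>u. if P a u then Some a else find (\<lambda>k. P k u) xs) \<in> measurable M (count_space UNIV)"
    by (rule measurable_If[OF _ Cons]) (use assms[of a] in \<open>auto simp: pred_def\<close>)
  then show ?case by simp
qed

lemma next_state_meas: "next_state lam y \<in> measurable borel (count_space UNIV)"
proof -
  define js where "js = sorted_list_of_set (jumps lam)"
  define cum where "cum = (\<lambda>k. \<Sum>i<k. lam (js ! i) y)"
  have f: "(\<lambda>u. find (\<lambda>k. u * qrate lam y < cum (Suc k)) [0..<length js]) \<in> measurable borel (count_space UNIV)"
    by (rule find_meas) measurable
  have "next_state lam y = (\<lambda>u. case_option y (\<lambda>k. shift y (js ! k)) (find (\<lambda>k. u * qrate lam y < cum (Suc k)) [0..<length js]))"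
    unfolding next_state_def js_def cum_def Let_def by (rule ext) simp
  also have "\<dots> \<in> measurable borel (count_space UNIV)"
    by (rule measurable_compose[OF f]) simp
  finally show ?thesis .
qed

lemma fst_meas: "(\<lambda>\<omega>. fst (\<omega> n)) \<in> borel_measurable Omega"
proof -
  have "fst \<in> borel_measurable base_measure"
    using measurable_fst[of borel borel] by (simp add: measurable_cong_sets[OF sets_base refl])
  then show ?thesis unfolding Omega_def
    by (rule measurable_compose[OF measurable_component_singleton, rotated]) simp
qed

lemma snd_meas: "(\<lambda>\<omega>. snd (\<omega> n)) \<in> borel_measurable Omega"
proof -
  have "snd \<in> borel_measurable base_measure"
    using measurable_snd[of borel borel] by (simp add: measurable_cong_sets[OF sets_base refl])
  then show ?thesis unfolding Omega_def
    by (rule measurable_compose[OF measurable_component_singleton, rotated]) simp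
qed

lemma jchain_meas[measurable]: "(\<lambda>\<omega>. jchain lam x \<omega> n) \<in> measurable Omega (count_space UNIV)"
proof (induction n)
  case 0 then show ?case by simp
next
  case (Suc n)
  have "(\<lambda>\<omega>. (\<lambda>i \<omega>. next_state lam i (fst (\<omega> n))) (jchain lam x \<omega> n) \<omega>) \<in> measurable Omega (count_space UNIV)"
    by (rule measurable_compose_countable[OF _ Suc])
       (rule measurable_compose[OF fst_meas next_state_meas])
  then show ?case by simp
qed

lemma hold_meas[measurable]: "(\<lambda>\<omega>. hold lam x \<omega> n) \<in> borel_measurable Omega"
proof -
  have "(\<lambda>\<omega>. (\<lambda>i \<omega>. snd (\<omega> n) / qrate lam i) (jchain lam x \<omega> n) \<omega>) \<in> borel_measurable Omega"
    by (rule measurable_compose_countable[OF _ jchain_meas]) (use snd_meas in measurable)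
  then show ?thesis unfolding hold_def by simp
qed

lemma one_step:
  assumes fin: "finite (jumps lam)" and qpos: "qrate lam y > 0" and nn: "\<And>\<eta>. lam \<eta> y \<ge> 0"
  shows "(\<integral>\<^sup>+u. g (next_state lam y u) \<partial>uniform_measure lborel {0..<1}) =
    (\<Sum>\<eta>\<in>jumps lam. ennreal (lam \<eta> y / qrate lam y) * g (shift y \<eta>))"
proof -
  define js where "js = sorted_list_of_set (jumps lam)"
  define L where "L = length js"
  define cum where "cum = (\<lambda>k. \<Sum>i<k. lam (js ! i) y)"
  define q where "q = qrate lam y"
  define I where "I = (\<lambda>k. {cum k / q ..< cum (Suc k) / q})"
  have dist: "distinct js" and setjs: "set js = jumps lam" using fin by (auto simp: js_def)
  have sumJ: "(\<Sum>\<eta>\<in>jumps lam. h \<eta>) = (\<Sum>k<L. h (js ! k))" for h :: "int \<Rightarrow> 'b::comm_monoid_add"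
    using sum.distinct_set_conv_list[OF dist, of h] setjs by (simp add: sum_list_sum_nth L_def atLeast0LessThan)
  have cumL: "cum L = q" unfolding cum_def q_def qrate_def using sumJ[of "\<lambda>\<eta>. lam \<eta> y"] by simp
  have cum_mono: "cum a \<le> cum b" if "a \<le> b" for a b
    unfolding cum_def using that by (intro sum_mono2) (auto simp: nn)
  have cum0: "cum 0 = 0" unfolding cum_def by simp
  have q0: "q > 0" using qpos q_def by simp
  have L0: "L \<noteq> 0" using cumL cum0 q0 by (metis less_irrefl)
  have ns: "next_state lam y u = (case find (\<lambda>k. u * q < cum (Suc k)) [0..<L] of None \<Rightarrow> y | Some k \<Rightarrow> shift y (js ! k))" for u
    unfolding next_state_def js_def cum_def L_def q_def Let_def by simp
  have pw: "g (next_state lam y u) = (\<Sum>k<L. g (shift y (js ! k)) * indicator (I k) u)" if u: "u \<in> {0..<1}" for u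
  proof -
    define v where "v = u * q"
    have v: "0 \<le> v" "v < q" using u q0 unfolding v_def by (auto simp: mult_less_cancel_right1)
    have ex: "\<exists>k. v < cum (Suc k)"
    proof -
      have "L \<noteq> 0" using L0 .
      then have "Suc (L - 1) = L" by simp
      then show ?thesis using v cumL by metis
    qed
    define k0 where "k0 = (LEAST k. v < cum (Suc k))"
    have k0: "v < cum (Suc k0)" unfolding k0_def by (rule LeastI_ex[OF ex])
    have k0min: "\<not> v < cum (Suc j)" if "j < k0" for j using not_less_Least[OF that[unfolded k0_def]] by (simp add: k0_def)
    have k0L: "k0 < L"
    proof (rule ccontr)
      assume "\<not> k0 < L"
      then have "L - 1 < k0" "L \<noteq> 0" using L0 by auto
      then have "\<not> v < cum (Suc (L - 1))" using k0min by blast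
      then show False using \<open>L \<noteq> 0\<close> cumL v by simp
    qed
    have low: "cum k0 \<le> v"
    proof (cases k0)
      case 0 then show ?thesis using cum0 v by simp
    next
      case (Suc j) then show ?thesis using k0min[of j] by simp
    qed
    have find: "find (\<lambda>k. v < cum (Suc k)) [0..<L] = Some k0"
      unfolding find_Some_iff using k0L k0 k0min by auto
    have ind: "indicator (I k) u = (if k = k0 then 1 else (0::ennreal))" for k
    proof -
      have "u \<in> I k \<longleftrightarrow> cum k \<le> v \<and> v < cum (Suc k)"
        unfolding I_def v_def using q0 by (auto simp: field_simps)
      also have "\<dots> \<longleftrightarrow> k = k0"
      proof
        assume a: "cum k \<le> v \<and> v < cum (Suc k)"
        show "k = k0"
        proof (rule ccontr)
          assume "k \<noteq> k0"
          then consider "k < k0" | "k0 < k" by linarith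
          then show False
          proof cases
            case 1 then show False using k0min a by blast
          next
            case 2 then have "cum (Suc k0) \<le> cum k" using cum_mono by simp
            then show False using a k0 by linarith
          qed
        qed
      qed (use low k0 in simp)
      finally show ?thesis by (simp add: indicator_def)
    qed
    have "(\<Sum>k<L. g (shift y (js ! k)) * indicator (I k) u) = g (shift y (js ! k0))"
      using k0L by (simp add: ind if_distrib[of "\<lambda>x. _ * x"] sum.delta[OF finite_lessThan] cong: if_cong)
    moreover have "next_state lam y u = shift y (js ! k0)" using find unfolding ns v_def by simp
    ultimately show ?thesis by simp
  qed
  have Isets: "I k \<in> sets lborel" for k unfolding I_def by simp
  have Isets': "I k \<in> sets borel" for k unfolding I_def by simp
  have IU: "emeasure (uniform_measure lborel {0..<1}) (I k) = ennreal (lam (js ! k) y / q)" if "k < L" for k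
  proof -
    have a: "0 \<le> cum k / q" using cum_mono[of 0 k] cum0 q0 by simp
    have b: "cum k / q \<le> cum (Suc k) / q" using cum_mono[of k "Suc k"] q0 by (simp add: divide_right_mono)
    have c: "cum (Suc k) / q \<le> 1" using cum_mono[of "Suc k" L] that cumL q0 by simp
    have "I k \<inter> {0..<1} = I k" unfolding I_def using a c by auto
    then have "emeasure (uniform_measure lborel {0..<1}) (I k) = emeasure lborel (I k) / emeasure lborel {0..<1::real}"
      by (subst emeasure_uniform_measure) (use Isets[of k] in \<open>auto simp: Int_commute\<close>)
    also have "\<dots> = ennreal (cum (Suc k) / q - cum k / q)" unfolding I_def using b by (simp add: divide_ennreal_def)
    also have "cum (Suc k) / q - cum k / q = lam (js ! k) y / q" unfolding cum_def by (simp add: add_divide_distrib)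
    finally show ?thesis .
  qed
  have AEU: "AE u in uniform_measure lborel {0..<1}. u \<in> {0..<1::real}"
    by (rule AE_uniform_measureI) auto
  have "(\<integral>\<^sup>+u. g (next_state lam y u) \<partial>uniform_measure lborel {0..<1}) =
        (\<integral>\<^sup>+u. (\<Sum>k<L. g (shift y (js ! k)) * indicator (I k) u) \<partial>uniform_measure lborel {0..<1})"
    by (rule nn_integral_cong_AE) (use AEU pw in auto)
  also have "\<dots> = (\<Sum>k<L. \<integral>\<^sup>+u. g (shift y (js ! k)) * indicator (I k) u \<partial>uniform_measure lborel {0..<1})"
    by (rule nn_integral_sum) (use Isets in \<open>auto intro!: borel_measurable_indicator\<close>)
  also have "\<dots> = (\<Sum>k<L. g (shift y (js ! k)) * ennreal (lam (js ! k) y / q))"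
  proof (rule sum.cong[OF refl])
    fix k assume "k \<in> {..<L}"
    have "(\<integral>\<^sup>+u. g (shift y (js ! k)) * indicator (I k) u \<partial>uniform_measure lborel {0..<1}) =
       g (shift y (js ! k)) * emeasure (uniform_measure lborel {0..<1}) (I k)"
      by (rule nn_integral_cmult_indicator) (use Isets' in simp)
    then show "(\<integral>\<^sup>+u. g (shift y (js ! k)) * indicator (I k) u \<partial>uniform_measure lborel {0..<1}) =
       g (shift y (js ! k)) * ennreal (lam (js ! k) y / q)" using IU \<open>k \<in> {..<L}\<close> by simp
  qed
  also have "\<dots> = (\<Sum>\<eta>\<in>jumps lam. ennreal (lam \<eta> y / qrate lam y) * g (shift y \<eta>))"
    unfolding sumJ q_def by (simp add: mult.commute)
  finally show ?thesis .
qed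

lemma exp_moment: "a \<ge> 0 \<Longrightarrow> (\<integral>\<^sup>+e. ennreal (a * e) \<partial>density lborel (\<lambda>t. ennreal (exponential_density 1 t))) = ennreal a"
proof -
  assume a: "a \<ge> 0"
  have "(\<integral>\<^sup>+e. ennreal (a * e) \<partial>density lborel (\<lambda>t. ennreal (exponential_density 1 t))) =
        (\<integral>\<^sup>+e. ennreal (exponential_density 1 e) * ennreal (a * e) \<partial>lborel)"
    by (subst nn_integral_density) auto
  also have "\<dots> = (\<integral>\<^sup>+e. ennreal a * ennreal (exponential_density 1 e * e ^ 1) \<partial>lborel)"
  proof (rule nn_integral_cong)
    fix e :: real
    show "ennreal (exponential_density 1 e) * ennreal (a * e) = ennreal a * ennreal (exponential_density 1 e * e ^ 1)"
    proof (cases "e < 0")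
      case True then show ?thesis by (simp add: exponential_density_def ennreal_neg)
    next
      case False then show ?thesis using a
        by (simp add: ennreal_mult'[symmetric] ennreal_mult[symmetric] mult_ac exponential_density_def)
    qed
  qed
  also have "\<dots> = ennreal a * (\<integral>\<^sup>+e. ennreal (exponential_density 1 e * e ^ 1) \<partial>lborel)"
    by (rule nn_integral_cmult) measurable
  also have "(\<integral>\<^sup>+e. ennreal (exponential_density 1 e * e ^ 1) \<partial>lborel) = 1"
    using nn_integral_erlang_ith_moment[of 1 0 1] by simp
  finally show ?thesis by simp
qed

lemma base_int:
  assumes G[measurable]: "G \<in> borel_measurable borel" and a: "a \<ge> 0"
  shows "(\<integral>\<^sup>+b. ennreal (a * snd b) + G (fst b) \<partial>base_measure) = ennreal a + (\<integral>\<^sup>+u. G u \<partial>uniform_measure lborel {0..<1})"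
proof -
  let ?U = "uniform_measure lborel {0..<1::real}"
  let ?E = "density lborel (\<lambda>t. ennreal (exponential_density 1 t))"
  interpret E: prob_space ?E by (rule prob_E)
  interpret U: prob_space ?U by (rule prob_U)
  have "(\<integral>\<^sup>+b. ennreal (a * snd b) + G (fst b) \<partial>base_measure) =
     (\<integral>\<^sup>+u. \<integral>\<^sup>+e. ennreal (a * snd (u, e)) + G (fst (u, e)) \<partial>?E \<partial>?U)"
    unfolding base_measure_def by (subst E.nn_integral_fst[symmetric]) (auto intro!: measurable_compose[OF measurable_fst G])
  also have "\<dots> = (\<integral>\<^sup>+u. ennreal a + G u \<partial>?U)"
  proof (rule nn_integral_cong)
    fix u :: real
    have "(\<integral>\<^sup>+e. ennreal (a * e) + G u \<partial>?E) = (\<integral>\<^sup>+e. ennreal (a * e) \<partial>?E) + (\<integral>\<^sup>+e. G u \<partial>?E)"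
      by (rule nn_integral_add) auto
    then show "(\<integral>\<^sup>+e. ennreal (a * snd (u, e)) + G (fst (u, e)) \<partial>?E) = ennreal a + G u"
      using exp_moment[OF a] E.emeasure_space_1 by simp
  qed
  also have "\<dots> = (\<integral>\<^sup>+u. ennreal a \<partial>?U) + (\<integral>\<^sup>+u. G u \<partial>?U)"
    by (rule nn_integral_add) auto
  finally show ?thesis by (simp add: U.emeasure_space_1)
qed

lemma AE_base: "AE b in base_measure. snd b \<ge> 0"
proof -
  let ?U = "uniform_measure lborel {0..<1::real}"
  let ?E = "density lborel (\<lambda>t. ennreal (exponential_density 1 t))"
  interpret E: prob_space ?E by (rule prob_E)
  interpret U: prob_space ?U by (rule prob_U)
  interpret P: pair_prob_space ?U ?E ..
  have "AE y in ?E. 0 \<le> y"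
    by (subst AE_density) (auto simp: exponential_density_def intro!: AE_I2 split: if_splits)
  then have "AE x in ?U. AE y in ?E. 0 \<le> snd (x, y)" by simp
  then show ?thesis unfolding base_measure_def
    by (intro P.AE_pair_measure) measurable
qed

lemma AE_Omega: "AE \<omega> in Omega. \<forall>k. snd (\<omega> k) \<ge> 0"
  unfolding Omega_def
proof (subst AE_all_countable, intro allI)
  fix k :: nat
  show "AE \<omega> in Pi\<^sub>M UNIV (\<lambda>_. base_measure). 0 \<le> snd (\<omega> k)"
    using AE_PiM_component[of UNIV "\<lambda>_. base_measure" k "\<lambda>b. 0 \<le> snd b"] AE_base prob_base by simp
qed



lemma jchain_case_nat: "jchain lam x (case_nat b \<omega>) (Suc k) = jchain lam (next_state lam x (fst b)) \<omega> k"
  by (induction k) auto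

lemma hold_case_nat0: "hold lam x (case_nat b \<omega>) 0 = snd b / qrate lam x"
  by (simp add: hold_def)

lemma hold_case_nat: "hold lam x (case_nat b \<omega>) (Suc k) = hold lam (next_state lam x (fst b)) \<omega> k"
  by (simp add: hold_def jchain_case_nat del: jchain.simps(2))

lemma all_le_Suc_iff: "(\<forall>k\<le>Suc n. P k) \<longleftrightarrow> P 0 \<and> (\<forall>k\<le>n. P (Suc k))"
  by (metis Suc_le_mono le0 not0_implies_Suc)

lemma all_1_Suc_iff': "(\<forall>k\<in>{Suc 0..Suc n}. P k) \<longleftrightarrow> (\<forall>k\<le>n. P (Suc k))"
  by (metis Suc_le_mono atLeastAtMost_iff le0 not0_implies_Suc not_one_le_zero Suc_le_eq le_refl One_nat_def)

lemma all_1_Suc_iff: "(\<forall>k\<in>{1..Suc n}. P k) \<longleftrightarrow> (\<forall>k\<le>n. P (Suc k))"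
  by (metis Suc_le_mono atLeastAtMost_iff le0 not0_implies_Suc not_one_le_zero Suc_le_eq le_refl One_nat_def)

context chain
begin

definition "Pn x0 x n = (\<integral>\<^sup>+\<omega>. (if \<forall>k\<le>n. jchain lam x \<omega> k \<noteq> x0 then 1 else 0) \<partial>Omega)"
definition "En x0 x n = (\<integral>\<^sup>+\<omega>. (\<Sum>k<n. ennreal (if \<forall>j\<le>k. jchain lam x \<omega> j \<noteq> x0 then hold lam x \<omega> k else 0)) \<partial>Omega)"

lemma q_nonneg: "q x \<ge> 0" unfolding qrate_def by (simp add: sum_nonneg nonneg)

lemma next_comp_meas: "(\<lambda>u. H (next_state lam x u)) \<in> borel_measurable borel"
  by (rule measurable_compose[OF next_state_meas]) simp

lemma Pn_Suc: "Pn x0 x (Suc n) = (if x = x0 then 0 else \<integral>\<^sup>+u. Pn x0 (next_state lam x u) n \<partial>uniform_measure lborel {0..<1})"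
proof -
  interpret O: prob_space Omega by (rule prob_Omega)
  have "Pn x0 x (Suc n) = (\<integral>\<^sup>+b. (\<integral>\<^sup>+\<omega>. (if \<forall>k\<le>Suc n. jchain lam x (case_nat b \<omega>) k \<noteq> x0 then 1 else 0) \<partial>Omega) \<partial>base_measure)"
    unfolding Pn_def by (rule first_step) measurable
  also have "\<dots> = (\<integral>\<^sup>+b. ennreal (0 * snd b) + (if x = x0 then 0 else Pn x0 (next_state lam (x) (fst b)) n) \<partial>base_measure)"
    by (rule nn_integral_cong) (simp add: all_le_Suc_iff jchain_case_nat Pn_def del: jchain.simps(2))
  also have "\<dots> = (\<integral>\<^sup>+u. (if x = x0 then 0 else Pn x0 (next_state lam x u) n) \<partial>uniform_measure lborel {0..<1})"
    by (subst base_int[where G = "\<lambda>u. if x = x0 then 0 else Pn x0 (next_state lam x u) n"]) (auto intro: next_comp_meas)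
  finally show ?thesis by simp
qed

lemma En_Suc: "En x0 x (Suc n) = (if x = x0 then 0 else ennreal (1 / q x) + \<integral>\<^sup>+u. En x0 (next_state lam x u) n \<partial>uniform_measure lborel {0..<1})"
proof -
  interpret O: prob_space Omega by (rule prob_Omega)
  let ?F = "\<lambda>x \<omega> n. (\<Sum>k<n. ennreal (if \<forall>j\<le>k. jchain lam x \<omega> j \<noteq> x0 then hold lam x \<omega> k else 0))"
  have "En x0 x (Suc n) = (\<integral>\<^sup>+b. (\<integral>\<^sup>+\<omega>. ?F x (case_nat b \<omega>) (Suc n) \<partial>Omega) \<partial>base_measure)"
    unfolding En_def by (rule first_step) measurable
  also have "\<dots> = (\<integral>\<^sup>+b. (if x = x0 then 0 else ennreal ((1 / q x) * snd b) + En x0 (next_state lam x (fst b)) n) \<partial>base_measure)"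
  proof (rule nn_integral_cong)
    fix b :: "real \<times> real"
    show "(\<integral>\<^sup>+\<omega>. ?F x (case_nat b \<omega>) (Suc n) \<partial>Omega) = (if x = x0 then 0 else ennreal ((1 / q x) * snd b) + En x0 (next_state lam x (fst b)) n)"
    proof (cases "x = x0")
      case True
      have e: "(\<forall>j\<le>k. jchain lam x \<omega> j \<noteq> x0) = False" for \<omega> k using True
        by (metis jchain.simps(1) le0)
      have z: "?F x \<omega> (Suc n) = 0" for \<omega>
      proof (rule sum.neutral, rule ballI)
        fix k
        have nk: "\<not> (\<forall>j\<le>k. jchain lam x \<omega> j \<noteq> x0)" using True by (metis jchain.simps(1) le0)
        show "ennreal (if \<forall>j\<le>k. jchain lam x \<omega> j \<noteq> x0 then hold lam x \<omega> k else 0) = 0"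
          unfolding if_not_P[OF nk] by simp
      qed
      have "(\<integral>\<^sup>+\<omega>. ?F x (case_nat b \<omega>) (Suc n) \<partial>Omega) = (\<integral>\<^sup>+\<omega>. 0 \<partial>Omega)"
        by (rule nn_integral_cong) (rule z)
      then show ?thesis using True by simp
    next
      case False
      have "?F x (case_nat b \<omega>) (Suc n) = ennreal ((1 / q x) * snd b) + ?F (next_state lam x (fst b)) \<omega> n" for \<omega>
        unfolding sum.lessThan_Suc_shift using False
        by (simp add: all_le_Suc_iff jchain_case_nat hold_case_nat hold_case_nat0 del: jchain.simps(2) cong: if_cong)
      then have "(\<integral>\<^sup>+\<omega>. ?F x (case_nat b \<omega>) (Suc n) \<partial>Omega) = (\<integral>\<^sup>+\<omega>. ennreal ((1 / q x) * snd b) + ?F (next_state lam x (fst b)) \<omega> n \<partial>Omega)"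
        by simp
      also have "\<dots> = (\<integral>\<^sup>+\<omega>. ennreal ((1 / q x) * snd b) \<partial>Omega) + En x0 (next_state lam x (fst b)) n"
        unfolding En_def by (rule nn_integral_add) measurable
      finally show ?thesis using False O.emeasure_space_1 by simp
    qed
  qed
  also have "\<dots> = (if x = x0 then 0 else ennreal (1 / q x) + \<integral>\<^sup>+u. En x0 (next_state lam x u) n \<partial>uniform_measure lborel {0..<1})"
  proof (cases "x = x0")
    case False
    have "1 / q x \<ge> 0" using q_nonneg by simp
    from base_int[OF next_comp_meas this, of "\<lambda>y. En x0 y n" x]
    show ?thesis using False by simp
  qed simp
  finally show ?thesis .
qed

lemma sum_link:
  assumes x: "x \<in> S" and AV: "\<And>y. y \<in> S \<Longrightarrow> A y = ennreal (V y)" and V0: "\<And>y. y \<in> S \<Longrightarrow> V y \<ge> 0"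
  shows "(\<Sum>\<eta>\<in>J. ennreal (lam \<eta> x / q x) * A (shift x \<eta>)) = ennreal (\<Sum>\<eta>\<in>J. p x \<eta> * V (shift x \<eta>))"
proof -
  have t: "ennreal (lam \<eta> x / q x) * A (shift x \<eta>) = ennreal (p x \<eta> * V (shift x \<eta>)) \<and> p x \<eta> * V (shift x \<eta>) \<ge> 0" for \<eta>
  proof (cases "lam \<eta> x = 0")
    case True then show ?thesis by (simp add: p_def)
  next
    case False
    have "shift x \<eta> \<in> S" by (rule shift_in[OF x False])
    then have v: "V (shift x \<eta>) \<ge> 0" "A (shift x \<eta>) = ennreal (V (shift x \<eta>))" using AV V0 by auto
    have "lam \<eta> x / q x = p x \<eta>" by (simp add: p_def)
    then show ?thesis using v ennreal_mult[OF p_nonneg[of x \<eta>] v(1)] p_nonneg[of x \<eta>] by simp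
  qed
  have "(\<Sum>\<eta>\<in>J. ennreal (lam \<eta> x / q x) * A (shift x \<eta>)) = (\<Sum>\<eta>\<in>J. ennreal (p x \<eta> * V (shift x \<eta>)))"
    using t by simp
  also have "\<dots> = ennreal (\<Sum>\<eta>\<in>J. p x \<eta> * V (shift x \<eta>))"
    by (rule sum_ennreal) (use t in blast)
  finally show ?thesis .
qed

lemma Vs_nonneg: "x \<in> S \<Longrightarrow> Vr B (\<lambda>_. 0) (\<lambda>_. 1) n x \<ge> 0" using Vs_bounds by blast

lemma Pn_Vr: "x \<in> S \<Longrightarrow> Pn x0 x n = ennreal (Vr {x0} (\<lambda>_. 0) (\<lambda>_. 1) n x)"
proof (induction n arbitrary: x)
  case 0
  interpret O: prob_space Omega by (rule prob_Omega)
  show ?case unfolding Pn_def using O.emeasure_space_1 by simp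
next
  case (Suc n)
  show ?case
  proof (cases "x = x0")
    case False
    have "Pn x0 x (Suc n) = (\<Sum>\<eta>\<in>J. ennreal (lam \<eta> x / q x) * Pn x0 (shift x \<eta>) n)"
      unfolding Pn_Suc using False by (simp add: one_step[OF finJ q_pos[OF Suc.prems] nonneg, of "\<lambda>y. Pn x0 y n"])
    also have "\<dots> = ennreal (\<Sum>\<eta>\<in>J. p x \<eta> * Vr {x0} (\<lambda>_. 0) (\<lambda>_. 1) n (shift x \<eta>))"
      by (rule sum_link[OF Suc.prems]) (use Suc.IH Vs_nonneg in auto)
    finally show ?thesis using False by simp
  qed (simp add: Pn_Suc)
qed

lemma En_Gr: "x \<in> S \<Longrightarrow> En x0 x n = ennreal (Gr {x0} n x)"
proof (induction n arbitrary: x)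
  case 0
  show ?case unfolding En_def by simp
next
  case (Suc n)
  show ?case
  proof (cases "x = x0")
    case False
    have "En x0 x (Suc n) = ennreal (1 / q x) + (\<Sum>\<eta>\<in>J. ennreal (lam \<eta> x / q x) * En x0 (shift x \<eta>) n)"
      unfolding En_Suc using False by (simp add: one_step[OF finJ q_pos[OF Suc.prems] nonneg, of "\<lambda>y. En x0 y n"])
    also have "(\<Sum>\<eta>\<in>J. ennreal (lam \<eta> x / q x) * En x0 (shift x \<eta>) n) = ennreal (\<Sum>\<eta>\<in>J. p x \<eta> * Gr {x0} n (shift x \<eta>))"
      by (rule sum_link[OF Suc.prems]) (use Suc.IH Gr_nonneg in auto)
    also have "ennreal (1 / q x) + \<dots> = ennreal (1 / q x + (\<Sum>\<eta>\<in>J. p x \<eta> * Gr {x0} n (shift x \<eta>)))"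
    proof (rule ennreal_plus[symmetric])
      show "0 \<le> 1 / q x" using q_nonneg by simp
      show "0 \<le> (\<Sum>\<eta>\<in>J. p x \<eta> * Gr {x0} n (shift x \<eta>))"
        using sum_mono_S[OF Suc.prems, of "\<lambda>_. 0" "Gr {x0} n"] Gr_nonneg by simp
    qed
    finally show ?thesis using False by simp
  qed (simp add: En_Suc)
qed

lemma F2:
  assumes x0: "x0 \<in> S"
  shows "emeasure Omega {\<omega> \<in> space Omega. \<forall>m\<in>{1..Suc n}. jchain lam x0 \<omega> m \<noteq> x0} =
    ennreal (\<Sum>\<eta>\<in>J. p x0 \<eta> * Vr {x0} (\<lambda>_. 0) (\<lambda>_. 1) n (shift x0 \<eta>))"
proof -
  let ?B = "{\<omega> \<in> space Omega. \<forall>m\<in>{1..Suc n}. jchain lam x0 \<omega> m \<noteq> x0}"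
  have Bs: "?B \<in> sets Omega" by measurable
  have "emeasure Omega ?B = (\<integral>\<^sup>+\<omega>. (if \<forall>m\<in>{1..Suc n}. jchain lam x0 \<omega> m \<noteq> x0 then 1 else 0) \<partial>Omega)"
  proof -
    have "emeasure Omega ?B = (\<integral>\<^sup>+\<omega>. indicator ?B \<omega> \<partial>Omega)" by (rule nn_integral_indicator[symmetric, OF Bs])
    also have "\<dots> = (\<integral>\<^sup>+\<omega>. (if \<forall>m\<in>{1..Suc n}. jchain lam x0 \<omega> m \<noteq> x0 then 1 else 0) \<partial>Omega)"
      by (rule nn_integral_cong) (simp add: indicator_def)
    finally show ?thesis .
  qed
  also have "\<dots> = (\<integral>\<^sup>+b. (\<integral>\<^sup>+\<omega>. (if \<forall>m\<in>{1..Suc n}. jchain lam x0 (case_nat b \<omega>) m \<noteq> x0 then 1 else 0) \<partial>Omega) \<partial>base_measure)"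
    by (rule first_step) measurable
  also have "\<dots> = (\<integral>\<^sup>+b. ennreal (0 * snd b) + Pn x0 (next_state lam x0 (fst b)) n \<partial>base_measure)"
    by (rule nn_integral_cong) (simp add: all_1_Suc_iff all_1_Suc_iff' jchain_case_nat Pn_def del: jchain.simps(2))
  also have "\<dots> = (\<integral>\<^sup>+u. Pn x0 (next_state lam x0 u) n \<partial>uniform_measure lborel {0..<1})"
    using base_int[OF next_comp_meas, of 0 "\<lambda>y. Pn x0 y n" x0] by simp
  also have "\<dots> = (\<Sum>\<eta>\<in>J. ennreal (lam \<eta> x0 / q x0) * Pn x0 (shift x0 \<eta>) n)"
    by (rule one_step[OF finJ q_pos[OF x0] nonneg])
  also have "\<dots> = ennreal (\<Sum>\<eta>\<in>J. p x0 \<eta> * Vr {x0} (\<lambda>_. 0) (\<lambda>_. 1) n (shift x0 \<eta>))"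
    by (rule sum_link[OF x0]) (use Pn_Vr Vs_nonneg in auto)
  finally show ?thesis .
qed

lemma ret_ge:
  assumes nn: "\<forall>k. snd (\<omega> k) \<ge> 0"
  shows "(\<Sum>k<n. ennreal (if \<forall>j\<in>{1..k}. jchain lam x0 \<omega> j \<noteq> x0 then hold lam x0 \<omega> k else 0)) \<le> return_time lam x0 \<omega>"
proof (cases "\<exists>m\<ge>1. jchain lam x0 \<omega> m = x0")
  case True
  define \<tau> where "\<tau> = (LEAST m. m \<ge> 1 \<and> jchain lam x0 \<omega> m = x0)"
  have \<tau>: "\<tau> \<ge> 1" "jchain lam x0 \<omega> \<tau> = x0" using LeastI_ex[OF True] unfolding \<tau>_def by auto
  have h0: "hold lam x0 \<omega> k \<ge> 0" for k unfolding hold_def using nn q_nonneg by simp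
  have "(\<Sum>k<n. ennreal (if \<forall>j\<in>{1..k}. jchain lam x0 \<omega> j \<noteq> x0 then hold lam x0 \<omega> k else 0))
      \<le> (\<Sum>k<n. (if k \<in> {..<\<tau>} then ennreal (hold lam x0 \<omega> k) else 0))"
  proof (rule sum_mono)
    fix k assume "k \<in> {..<n}"
    show "ennreal (if \<forall>j\<in>{1..k}. jchain lam x0 \<omega> j \<noteq> x0 then hold lam x0 \<omega> k else 0) \<le> (if k \<in> {..<\<tau>} then ennreal (hold lam x0 \<omega> k) else 0)"
    proof (cases "\<forall>j\<in>{1..k}. jchain lam x0 \<omega> j \<noteq> x0")
      case True
      have "k < \<tau>"
      proof (rule ccontr)
        assume "\<not> k < \<tau>"
        then have "\<tau> \<in> {1..k}" using \<tau> by auto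
        then show False using True \<tau> by blast
      qed
      then show ?thesis using True by simp
    next
      case False
      show ?thesis unfolding if_not_P[OF False] by simp
    qed
  qed
  also have "\<dots> = (\<Sum>k\<in>{..<n} \<inter> {..<\<tau>}. ennreal (hold lam x0 \<omega> k))"
    by (rule sum.inter_restrict[symmetric]) simp
  also have "\<dots> \<le> (\<Sum>k<\<tau>. ennreal (hold lam x0 \<omega> k))"
    by (rule sum_mono2) auto
  also have "\<dots> = ennreal (\<Sum>k<\<tau>. hold lam x0 \<omega> k)"
    by (rule sum_ennreal) (use h0 in auto)
  also have "\<dots> = return_time lam x0 \<omega>"
    unfolding return_time_def using True \<tau>_def by simp
  finally show ?thesis .
next
  case False
  have "return_time lam x0 \<omega> = \<infinity>" unfolding return_time_def if_not_P[OF False] ..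
  then show ?thesis by simp
qed

lemma F1:
  assumes x0: "x0 \<in> S"
  shows "ennreal (1 / q x0 + (\<Sum>\<eta>\<in>J. p x0 \<eta> * Gr {x0} n (shift x0 \<eta>))) \<le> (\<integral>\<^sup>+\<omega>. return_time lam x0 \<omega> \<partial>Omega)"
proof -
  interpret O: prob_space Omega by (rule prob_Omega)
  let ?Fn = "\<lambda>\<omega>. (\<Sum>k<Suc n. ennreal (if \<forall>j\<in>{1..k}. jchain lam x0 \<omega> j \<noteq> x0 then hold lam x0 \<omega> k else 0))"
  let ?F = "\<lambda>x \<omega> n. (\<Sum>k<n. ennreal (if \<forall>j\<le>k. jchain lam x \<omega> j \<noteq> x0 then hold lam x \<omega> k else 0))"
  have "(\<integral>\<^sup>+\<omega>. ?Fn \<omega> \<partial>Omega) = (\<integral>\<^sup>+b. (\<integral>\<^sup>+\<omega>. ?Fn (case_nat b \<omega>) \<partial>Omega) \<partial>base_measure)"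
    by (rule first_step) measurable
  also have "\<dots> = (\<integral>\<^sup>+b. ennreal ((1 / q x0) * snd b) + En x0 (next_state lam x0 (fst b)) n \<partial>base_measure)"
  proof (rule nn_integral_cong)
    fix b :: "real \<times> real"
    have "?Fn (case_nat b \<omega>) = ennreal ((1 / q x0) * snd b) + ?F (next_state lam x0 (fst b)) \<omega> n" for \<omega>
      unfolding sum.lessThan_Suc_shift
      by (simp add: all_1_Suc_iff all_1_Suc_iff' jchain_case_nat hold_case_nat hold_case_nat0 del: jchain.simps(2) cong: if_cong)
    then have "(\<integral>\<^sup>+\<omega>. ?Fn (case_nat b \<omega>) \<partial>Omega) = (\<integral>\<^sup>+\<omega>. ennreal ((1 / q x0) * snd b) + ?F (next_state lam x0 (fst b)) \<omega> n \<partial>Omega)"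
      by simp
    also have "\<dots> = (\<integral>\<^sup>+\<omega>. ennreal ((1 / q x0) * snd b) \<partial>Omega) + En x0 (next_state lam x0 (fst b)) n"
      unfolding En_def by (rule nn_integral_add) measurable
    finally show "(\<integral>\<^sup>+\<omega>. ?Fn (case_nat b \<omega>) \<partial>Omega) = ennreal ((1 / q x0) * snd b) + En x0 (next_state lam x0 (fst b)) n"
      using O.emeasure_space_1 by simp
  qed
  also have "\<dots> = ennreal (1 / q x0) + (\<integral>\<^sup>+u. En x0 (next_state lam x0 u) n \<partial>uniform_measure lborel {0..<1})"
  proof -
    have "1 / q x0 \<ge> 0" using q_nonneg by simp
    from base_int[OF next_comp_meas this, of "\<lambda>y. En x0 y n" x0] show ?thesis by simp
  qed
  also have "(\<integral>\<^sup>+u. En x0 (next_state lam x0 u) n \<partial>uniform_measure lborel {0..<1}) = (\<Sum>\<eta>\<in>J. ennreal (lam \<eta> x0 / q x0) * En x0 (shift x0 \<eta>) n)"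
    by (rule one_step[OF finJ q_pos[OF x0] nonneg])
  also have "\<dots> = ennreal (\<Sum>\<eta>\<in>J. p x0 \<eta> * Gr {x0} n (shift x0 \<eta>))"
    by (rule sum_link[OF x0]) (use En_Gr Gr_nonneg in auto)
  also have "ennreal (1 / q x0) + \<dots> = ennreal (1 / q x0 + (\<Sum>\<eta>\<in>J. p x0 \<eta> * Gr {x0} n (shift x0 \<eta>)))"
  proof (rule ennreal_plus[symmetric])
    show "0 \<le> 1 / q x0" using q_nonneg by simp
    show "0 \<le> (\<Sum>\<eta>\<in>J. p x0 \<eta> * Gr {x0} n (shift x0 \<eta>))"
      using sum_mono_S[OF x0, of "\<lambda>_. 0" "Gr {x0} n"] Gr_nonneg by simp
  qed
  finally have eq: "(\<integral>\<^sup>+\<omega>. ?Fn \<omega> \<partial>Omega) = ennreal (1 / q x0 + (\<Sum>\<eta>\<in>J. p x0 \<eta> * Gr {x0} n (shift x0 \<eta>)))" .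
  have "(\<integral>\<^sup>+\<omega>. ?Fn \<omega> \<partial>Omega) \<le> (\<integral>\<^sup>+\<omega>. return_time lam x0 \<omega> \<partial>Omega)"
  proof (rule nn_integral_mono_AE)
    show "AE \<omega> in Omega. ?Fn \<omega> \<le> return_time lam x0 \<omega>"
      by (rule eventually_mono[OF AE_Omega]) (rule ret_ge)
  qed
  then show ?thesis using eq by simp
qed

end


context chain
begin

lemma not_PhiV_succ:
  assumes x0: "x0 \<in> S" and recur: "recurrent_chain S lam"
    and e: "\<eta> \<in> J" "lam \<eta> x0 > 0" and ph: "PhiV x0 (shift x0 \<eta>)"
  shows False
proof -
  interpret O: prob_space Omega by (rule prob_Omega)
  obtain d where d: "d > 0" "\<And>n. Vr {x0} (\<lambda>_. 0) (\<lambda>_. 1) n (shift x0 \<eta>) \<ge> d"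
    using ph unfolding PhiV_def by blast
  have a1: "shift x0 \<eta> \<in> S" using shift_in'[OF x0 e(2)] .
  have pp: "p x0 \<eta> > 0" using lam_pos_J[OF e x0] .
  define c where "c = p x0 \<eta> * d"
  have c0: "c > 0" unfolding c_def using pp d(1) by simp
  define B where "B = (\<lambda>n. {\<omega> \<in> space Omega. \<forall>m\<in>{1..Suc n}. jchain lam x0 \<omega> m \<noteq> x0})"
  define A where "A = (\<lambda>n. {\<omega> \<in> space Omega. \<exists>m\<in>{1..Suc n}. jchain lam x0 \<omega> m = x0})"
  have Bs: "B n \<in> sets Omega" for n unfolding B_def by measurable
  have As: "A n \<in> sets Omega" for n unfolding A_def by measurable
  have AB: "A n = space Omega - B n" for n unfolding A_def B_def by auto
  have mB: "measure Omega (B n) \<ge> c" for n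
  proof -
    have "c \<le> p x0 \<eta> * Vr {x0} (\<lambda>_. 0) (\<lambda>_. 1) n (shift x0 \<eta>)"
      unfolding c_def using d(2)[of n] pp by (simp add: mult_left_mono)
    also have "\<dots> \<le> (\<Sum>\<eta>\<in>J. p x0 \<eta> * Vr {x0} (\<lambda>_. 0) (\<lambda>_. 1) n (shift x0 \<eta>))"
      by (rule single_term[OF x0 e(1)]) (use Vs_nonneg in blast)
    finally have le: "c \<le> (\<Sum>\<eta>\<in>J. p x0 \<eta> * Vr {x0} (\<lambda>_. 0) (\<lambda>_. 1) n (shift x0 \<eta>))" .
    have "emeasure Omega (B n) = ennreal (\<Sum>\<eta>\<in>J. p x0 \<eta> * Vr {x0} (\<lambda>_. 0) (\<lambda>_. 1) n (shift x0 \<eta>))"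
      unfolding B_def by (rule F2[OF x0])
    then have "measure Omega (B n) = (\<Sum>\<eta>\<in>J. p x0 \<eta> * Vr {x0} (\<lambda>_. 0) (\<lambda>_. 1) n (shift x0 \<eta>))"
      using le c0 by (simp add: O.emeasure_eq_measure)
    then show ?thesis using le by simp
  qed
  have mA: "measure Omega (A n) \<le> 1 - c" for n
    using O.prob_compl[OF Bs[of n]] mB[of n] AB[of n] by simp
  have inc: "incseq A"
  proof (rule incseq_SucI)
    fix n show "A n \<subseteq> A (Suc n)" unfolding A_def by auto
  qed
  have lim: "(\<lambda>n. measure Omega (A n)) \<longlonglongrightarrow> measure Omega (\<Union>n. A n)"
    by (rule O.finite_Lim_measure_incseq) (use As inc in auto)
  have "measure Omega (\<Union>n. A n) \<le> 1 - c"
    by (rule LIMSEQ_le_const2[OF lim]) (use mA in auto)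
  moreover have "(\<Union>n. A n) = {\<omega> \<in> space Omega. \<exists>n\<ge>1. jchain lam x0 \<omega> n = x0}"
  proof
    show "(\<Union>n. A n) \<subseteq> {\<omega> \<in> space Omega. \<exists>n\<ge>1. jchain lam x0 \<omega> n = x0}"
      unfolding A_def by auto
    show "{\<omega> \<in> space Omega. \<exists>n\<ge>1. jchain lam x0 \<omega> n = x0} \<subseteq> (\<Union>n. A n)"
    proof
      fix \<omega> assume "\<omega> \<in> {\<omega> \<in> space Omega. \<exists>n\<ge>1. jchain lam x0 \<omega> n = x0}"
      then obtain m where m: "\<omega> \<in> space Omega" "m \<ge> 1" "jchain lam x0 \<omega> m = x0" by blast
      then have "\<omega> \<in> A m" unfolding A_def by force
      then show "\<omega> \<in> (\<Union>n. A n)" by blast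
    qed
  qed
  moreover have "emeasure Omega {\<omega> \<in> space Omega. \<exists>n\<ge>1. jchain lam x0 \<omega> n = x0} = 1"
    using recur x0 unfolding recurrent_chain_def by blast
  ultimately show False using c0 by (simp add: O.emeasure_eq_measure)
qed

lemma PhiG_succ_inf:
  assumes x0: "x0 \<in> S"
    and e: "\<eta> \<in> J" "lam \<eta> x0 > 0" and ph: "PhiG x0 (shift x0 \<eta>)"
  shows "(\<integral>\<^sup>+\<omega>. return_time lam x0 \<omega> \<partial>Omega) = \<infinity>"
proof (rule ccontr)
  assume "(\<integral>\<^sup>+\<omega>. return_time lam x0 \<omega> \<partial>Omega) \<noteq> \<infinity>"
  then obtain m :: nat where m: "(\<integral>\<^sup>+\<omega>. return_time lam x0 \<omega> \<partial>Omega) < of_nat m"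
  proof -
    have "(\<integral>\<^sup>+\<omega>. return_time lam x0 \<omega> \<partial>Omega) < top" using \<open>_ \<noteq> \<infinity>\<close> by (simp add: less_top)
    from ennreal_Ex_less_of_nat[OF this] show ?thesis using that by blast
  qed
  have pp: "p x0 \<eta> > 0" using lam_pos_J[OF e x0] .
  obtain n where n: "Gr {x0} n (shift x0 \<eta>) > real m / p x0 \<eta>" using ph unfolding PhiG_def by blast
  have "real m < p x0 \<eta> * Gr {x0} n (shift x0 \<eta>)" using n pp by (simp add: field_simps)
  also have "\<dots> \<le> (\<Sum>\<eta>\<in>J. p x0 \<eta> * Gr {x0} n (shift x0 \<eta>))"
    by (rule single_term[OF x0 e(1)]) (use Gr_nonneg in blast)
  also have "\<dots> \<le> 1 / q x0 + (\<Sum>\<eta>\<in>J. p x0 \<eta> * Gr {x0} n (shift x0 \<eta>))" using q_nonneg by simp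
  finally have "ennreal (real m) \<le> ennreal (1 / q x0 + (\<Sum>\<eta>\<in>J. p x0 \<eta> * Gr {x0} n (shift x0 \<eta>)))"
    by (simp add: ennreal_leI)
  also have "\<dots> \<le> (\<integral>\<^sup>+\<omega>. return_time lam x0 \<omega> \<partial>Omega)" by (rule F1[OF x0])
  finally have "of_nat m \<le> (\<integral>\<^sup>+\<omega>. return_time lam x0 \<omega> \<partial>Omega)"
    by (simp only: ennreal_of_nat_eq_real_of_nat)
  then show False using m by (simp add: not_le[symmetric])
qed

theorem main_locale:
  fixes f1 f2 :: "nat \<Rightarrow> real"
  assumes recur: "recurrent_chain S lam"
    and f1_nonneg: "\<forall>x\<in>S. f1 x \<ge> 0"
    and f2_nonneg: "\<forall>x\<in>S. f2 x \<ge> 0"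
    and lim1: "filterlim f1 at_top (at_top_in S)"
    and lim2: "filterlim (\<lambda>x. f2 x / f1 x) at_top (at_top_in S)"
    and gen1: "eventually (\<lambda>x. x \<in> S \<longrightarrow> gen lam f1 x \<ge> 0) at_top"
    and gen2: "\<exists>C>0. eventually (\<lambda>x. x \<in> S \<longrightarrow> gen lam f2 x \<le> C) at_top"
  shows "null_recurrent_chain S lam"
  unfolding null_recurrent_chain_def
proof (intro conjI ballI recur)
  fix x0 assume x0: "x0 \<in> S"
  obtain N1 where N1: "\<And>x. x \<ge> N1 \<Longrightarrow> x \<in> S \<Longrightarrow> gen lam f1 x \<ge> 0"
    using gen1 unfolding eventually_at_top_linorder by blast
  obtain C N2 where C: "C > 0" and N2: "\<And>x. x \<ge> N2 \<Longrightarrow> x \<in> S \<Longrightarrow> gen lam f2 x \<le> C"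
    using gen2 unfolding eventually_at_top_linorder by blast
  define N where "N = N1 + N2 + x0"
  have dom: "\<exists>K\<ge>0. \<forall>x\<in>S. f1 x \<le> e * f2 x + K" if e: "e > 0" for e
  proof -
    have ev1: "eventually (\<lambda>x. f1 x > 0) (at_top_in S)"
      using lim1 by (simp add: filterlim_at_top_dense)
    have ev2: "eventually (\<lambda>x. f2 x / f1 x \<ge> 1 / e) (at_top_in S)"
      using lim2 by (simp add: filterlim_at_top)
    have "eventually (\<lambda>x. f1 x > 0 \<and> f2 x / f1 x \<ge> 1 / e) (at_top_in S)"
      using ev1 ev2 by (rule eventually_conj)
    then obtain N3 where N3: "\<And>x. x \<ge> N3 \<Longrightarrow> x \<in> S \<Longrightarrow> f1 x > 0 \<and> f2 x / f1 x \<ge> 1 / e"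
      unfolding eventually_inf_principal eventually_at_top_linorder by blast
    define K where "K = (\<Sum>x<N3. \<bar>f1 x\<bar>)"
    have K0: "K \<ge> 0" unfolding K_def by (simp add: sum_nonneg)
    have "f1 x \<le> e * f2 x + K" if x: "x \<in> S" for x
    proof (cases "x \<ge> N3")
      case True
      then have h: "f1 x > 0" "f2 x / f1 x \<ge> 1 / e" using N3 x by auto
      then have "f2 x \<ge> f1 x / e" by (simp add: field_simps)
      then have "e * f2 x \<ge> f1 x" using e by (simp add: field_simps)
      then show ?thesis using K0 by simp
    next
      case False
      then have "\<bar>f1 x\<bar> \<le> K" unfolding K_def by (intro member_le_sum) auto
      moreover have "e * f2 x \<ge> 0" using e f2_nonneg x by simp
      ultimately show ?thesis by simp
    qed
    then show ?thesis using K0 by blast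
  qed
  obtain y where y: "y \<in> S" "f1 y > (\<Sum>x\<le>N. \<bar>f1 x\<bar>)"
  proof -
    have "eventually (\<lambda>x. f1 x > (\<Sum>x\<le>N. \<bar>f1 x\<bar>)) (at_top_in S)"
      using lim1 by (simp add: filterlim_at_top_dense)
    then obtain N4 where N4: "\<And>x. x \<ge> N4 \<Longrightarrow> x \<in> S \<Longrightarrow> f1 x > (\<Sum>x\<le>N. \<bar>f1 x\<bar>)"
      unfolding eventually_inf_principal eventually_at_top_linorder by blast
    obtain z where "z \<in> S" "z \<ge> N4" using S_inf unfolding infinite_nat_iff_unbounded_le by blast
    then show ?thesis using N4 that by blast
  qed
  have "\<exists>\<eta>. \<eta> \<in> J \<and> lam \<eta> x0 > 0 \<and> (PhiV x0 (shift x0 \<eta>) \<or> PhiG x0 (shift x0 \<eta>))"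
  proof (rule pure_main[OF x0 _ _ _ _ _ dom y])
    show "x0 \<le> N" unfolding N_def by simp
    show "gen lam f1 x \<ge> 0" if "x \<in> S" "x > N" for x using N1 that unfolding N_def by simp
    show "gen lam f2 x \<le> C" if "x \<in> S" "x > N" for x using N2 that unfolding N_def by simp
    show "C \<ge> 0" using C by simp
    show "f2 x \<ge> 0" if "x \<in> S" for x using f2_nonneg that by simp
  qed
  then obtain \<eta> where e: "\<eta> \<in> J" "lam \<eta> x0 > 0" and ph: "PhiV x0 (shift x0 \<eta>) \<or> PhiG x0 (shift x0 \<eta>)"
    by blast
  show "(\<integral>\<^sup>+\<omega>. return_time lam x0 \<omega> \<partial>Omega) = \<infinity>"
    using ph not_PhiV_succ[OF x0 recur e] PhiG_succ_inf[OF x0 e] by blast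
qed

end

theorem mainTheorem5:
  fixes S :: "nat set" and lam :: "int \<Rightarrow> nat \<Rightarrow> real" and f1 f2 :: "nat \<Rightarrow> real"
  assumes S_inf: "infinite S"
    and Gamma: "\<exists>\<Gamma>. finite \<Gamma> \<and> (\<forall>\<eta>. \<eta> \<notin> \<Gamma> \<longrightarrow> (\<forall>x. lam \<eta> x = 0))"
    and nonneg: "\<And>\<eta> x. lam \<eta> x \<ge> 0"
    and stay: "\<And>\<eta> x. x \<in> S \<Longrightarrow> int x + \<eta> \<notin> int ` S \<Longrightarrow> lam \<eta> x = 0"
    and irred: "irreducible_chain S lam"
    and recur: "recurrent_chain S lam"
    and f1_nonneg: "\<forall>x\<in>S. f1 x \<ge> 0"
    and f2_nonneg: "\<forall>x\<in>S. f2 x \<ge> 0"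
    and lim1: "filterlim f1 at_top (at_top_in S)"
    and lim2: "filterlim (\<lambda>x. f2 x / f1 x) at_top (at_top_in S)"
    and gen1: "eventually (\<lambda>x. x \<in> S \<longrightarrow> gen lam f1 x \<ge> 0) at_top"
    and gen2: "\<exists>C>0. eventually (\<lambda>x. x \<in> S \<longrightarrow> gen lam f2 x \<le> C) at_top"
  shows "null_recurrent_chain S lam"
proof -
  interpret chain S lam
    by (unfold_locales) (use S_inf Gamma nonneg stay irred in auto)
  show ?thesis by (rule main_locale[OF recur f1_nonneg f2_nonneg lim1 lim2 gen1 gen2])
qed

end
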